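(* There exists a countable, connected, locally finite graph $G$ with a vertex $v$ such that $G$ has 2-distinguishing density zero at $v$, but $G$ does not have 2-distinguishing density zero; in fact there is a vertex $v'$ of $G$ such that no 2-distinguishing coloring $l$ of $G$ satisfies $\delta_{v'}(l)=0$.
   Context: All graphs are simple with vertex set $V$; $d$ is the graph distance and $B_x(r)=\{y\in V: d(x,y)\le r\}$. A 2-coloring $l:V\to\{\text{blue},\text{red}\}$ is 2-distinguishing if the only automorphism $g$ of $G$ with $l(g(x))=l(x)$ for all $x$ is the identity. For $W\subseteq V$ and $x\in V$, $\delta_x(W):=\lim_{n\to\infty}\frac{|B_x(n)\cap W|}{|B_x(n)|}$ if the limit exists (finite/infinite $=0$, infinite/infinite undefined); if $\delta_x(W)$ exists for all $x$, $\delta(W):=\sup_x\delta_x(W)$. For a 2-coloring $l$ with color classes $V_{\text{blue}},V_{\text{red}}$: $\delta_x(l):=\min\{\delta_x(V_{\text{blue}}),\delta_x(V_{\text{red}})\}$, $\delta(l):=\min\{\delta(V_{\text{blue}}),\delta(V_{\text{red}})\}$. $G$ has 2-distinguishing density zero at $x$ if some 2-distinguishing coloring $l$ has $\delta_x(l)=0$, and has 2-distinguishing density zero if some 2-distinguishing coloring $l$ has $\delta(l)=0$. *)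

theory Defs
  imports Complex_Main "HOL-Library.Countable_Set"
begin

text \<open>Vertices are natural numbers
(every countable graph is isomorphic to one on a subset of nat).\<close>

definition simple_graph :: "'a set \<Rightarrow> ('a \<times> 'a) set \<Rightarrow> bool" where
  "simple_graph V E \<longleftrightarrow> E \<subseteq> V \<times> V \<and> sym E \<and> (\<forall>x. (x, x) \<notin> E)"

definition connected_graph :: "'a set \<Rightarrow> ('a \<times> 'a) set \<Rightarrow> bool" where
  "connected_graph V E \<longleftrightarrow> (\<forall>x\<in>V. \<forall>y\<in>V. (x, y) \<in> E\<^sup>*)"

definition locally_finite :: "'a set \<Rightarrow> ('a \<times> 'a) set \<Rightarrow> bool" where
  "locally_finite V E \<longleftrightarrow> (\<forall>x\<in>V. finite {y. (x, y) \<in> E})"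

definition ball_graph :: "'a set \<Rightarrow> ('a \<times> 'a) set \<Rightarrow> 'a \<Rightarrow> nat \<Rightarrow> 'a set" where
  "ball_graph V E x n = {y \<in> V. \<exists>k\<le>n. (x, y) \<in> E ^^ k}"

definition automorphism :: "'a set \<Rightarrow> ('a \<times> 'a) set \<Rightarrow> ('a \<Rightarrow> 'a) \<Rightarrow> bool" where
  "automorphism V E g \<longleftrightarrow> bij_betw g V V \<and>
     (\<forall>x\<in>V. \<forall>y\<in>V. (x, y) \<in> E \<longleftrightarrow> (g x, g y) \<in> E)"

text \<open>A 2-coloring is l :: 'a => bool (True = blue, False = red).
  It is 2-distinguishing iff the only color-preserving automorphism is the identity.\<close>
definition distinguishing :: "'a set \<Rightarrow> ('a \<times> 'a) set \<Rightarrow> ('a \<Rightarrow> bool) \<Rightarrow> bool" where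
  "distinguishing V E l \<longleftrightarrow>
     (\<forall>g. automorphism V E g \<and> (\<forall>x\<in>V. l (g x) = l x) \<longrightarrow> (\<forall>x\<in>V. g x = x))"

definition density_seq :: "'a set \<Rightarrow> ('a \<times> 'a) set \<Rightarrow> 'a \<Rightarrow> 'a set \<Rightarrow> nat \<Rightarrow> real" where
  "density_seq V E x W n = real (card (ball_graph V E x n \<inter> W)) / real (card (ball_graph V E x n))"

definition color_class :: "'a set \<Rightarrow> ('a \<Rightarrow> bool) \<Rightarrow> bool \<Rightarrow> 'a set" where
  "color_class V l c = {x \<in> V. l x = c}"

definition density_zero_at_col :: "'a set \<Rightarrow> ('a \<times> 'a) set \<Rightarrow> 'a \<Rightarrow> ('a \<Rightarrow> bool) \<Rightarrow> bool" where
  "density_zero_at_col V E x l \<longleftrightarrow>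
     (\<exists>a b. density_seq V E x (color_class V l True) \<longlonglongrightarrow> a \<and>
            density_seq V E x (color_class V l False) \<longlonglongrightarrow> b \<and> min a b = 0)"

definition density_zero_col :: "'a set \<Rightarrow> ('a \<times> 'a) set \<Rightarrow> ('a \<Rightarrow> bool) \<Rightarrow> bool" where
  "density_zero_col V E l \<longleftrightarrow>
     (\<forall>x\<in>V. convergent (density_seq V E x (color_class V l True)) \<and>
             convergent (density_seq V E x (color_class V l False))) \<and>
     min (SUP x\<in>V. lim (density_seq V E x (color_class V l True)))
         (SUP x\<in>V. lim (density_seq V E x (color_class V l False))) = 0"

definition dist_density_zero_at :: "'a set \<Rightarrow> ('a \<times> 'a) set \<Rightarrow> 'a \<Rightarrow> bool" where
  "dist_density_zero_at V E x \<longleftrightarrow> (\<exists>l. distinguishing V E l \<and> density_zero_at_col V E x l)"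

definition dist_density_zero :: "'a set \<Rightarrow> ('a \<times> 'a) set \<Rightarrow> bool" where
  "dist_density_zero V E \<longleftrightarrow> (\<exists>l. distinguishing V E l \<and> density_zero_col V E l)"

end

theory Submission
  imports Defs "HOL-Library.Countable"
begin


lemma bit_lt: "(x::nat) < 2^n \<Longrightarrow> bit x i \<Longrightarrow> i < n"
  by (metis bit_take_bit_iff take_bit_nat_eq_self)
lemma bit_ex: "(x::nat) \<noteq> 0 \<Longrightarrow> \<exists>i. bit x i"
  using bit_eq_iff[of x 0] by auto
lemma bit_diff: "(x::nat) < 2^n \<Longrightarrow> y < 2^n \<Longrightarrow> (\<forall>i<n. bit x i = bit y i) \<Longrightarrow> x = y"
  by (metis bit_eq_iff bit_lt)

fun h :: "nat \<Rightarrow> nat" where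
  "h 0 = 1" | "h (Suc 0) = 2" | "h (Suc (Suc k)) = 2 ^ h (Suc k) - 1"

lemma pow_ge: "(x::nat) \<ge> 2 \<Longrightarrow> x + 2 \<le> 2 ^ x"
proof (induction x rule: dec_induct)
  case base then show ?case by simp
next
  case (step n) then show ?case by simp
qed

lemma pow_ge3: "(x::nat) \<ge> 3 \<Longrightarrow> 2 * x + 1 \<le> 2 ^ x"
proof (induction x rule: dec_induct)
  case base then show ?case by simp
next
  case (step n) then show ?case by simp
qed

lemma h_Suc_ge: "h (Suc k) \<ge> 2 \<and> h (Suc k) \<ge> Suc (h k)"
proof (induction k)
  case 0 then show ?case by simp
next
  case (Suc k)
  then have "h (Suc k) + 2 \<le> 2 ^ h (Suc k)" using pow_ge by blast
  then show ?case using Suc by (simp only: h.simps) linarith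
qed

lemma h_ge: "h k \<ge> Suc k"
  by (induction k) (use h_Suc_ge in \<open>auto intro: le_trans\<close>)

lemma h_pos: "h k \<ge> 1"
  using h_ge[of k] by simp

lemma h_mono: "k \<le> k' \<Longrightarrow> h k \<le> h k'"
proof (induction k' rule: dec_induct)
  case base then show ?case by simp
next
  case (step n) then show ?case using h_Suc_ge[of n] by simp
qed

lemma h_sum2: "(\<Sum>k\<le>m. h k) \<le> h (Suc m)"
proof (induction m)
  case 0 then show ?case by simp
next
  case (Suc m)
  show ?case
  proof (cases m)
    case 0 then show ?thesis by (simp add: numeral_eq_Suc)
  next
    case (Suc m')
    have "h (Suc m) \<ge> 3" using h_ge[of "Suc m"] Suc by simp
    then have "2 * h (Suc m) + 1 \<le> 2 ^ h (Suc m)" by (rule pow_ge3)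
    then show ?thesis using Suc.IH by simp
  qed
qed

lemma h_sum1: "(\<Sum>k\<le>m. h k) \<le> 2 * h m"
proof (cases m)
  case 0 then show ?thesis by simp
next
  case (Suc m') then show ?thesis using h_sum2[of m'] by simp
qed

lemma h_bits: "j < h (Suc k) \<Longrightarrow> 0 < k \<Longrightarrow> j + 1 < 2 ^ h k"
  by (cases k) auto



lemma level_upper:
  assumes c: "lam c = 0"
  and step: "\<And>x y. (x,y) \<in> E \<Longrightarrow> lam y \<le> Suc (lam x)"
  shows "(c,x) \<in> E^^n \<Longrightarrow> lam x \<le> n"
proof (induction n arbitrary: x)
  case 0 then show ?case using c by simp
next
  case (Suc n)
  then obtain y where "(c,y) \<in> E^^n" "(y,x) \<in> E" by auto
  then show ?case using Suc.IH step by fastforce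
qed

lemma level_lower:
  assumes E: "E \<subseteq> V \<times> V"
  and zero: "\<And>x. x \<in> V \<Longrightarrow> lam x = 0 \<Longrightarrow> x = c"
  and pred: "\<And>x. x \<in> V \<Longrightarrow> 0 < lam x \<Longrightarrow> \<exists>y. (y,x) \<in> E \<and> Suc (lam y) = lam x"
  shows "x \<in> V \<Longrightarrow> (c,x) \<in> E^^(lam x)"
proof -
  have "\<forall>x\<in>V. lam x = m \<longrightarrow> (c,x) \<in> E^^m" for m
  proof (induction m)
    case 0 then show ?case using zero by auto
  next
    case (Suc m)
    show ?case
    proof (intro ballI impI)
      fix x assume x: "x \<in> V" "lam x = Suc m"
      then obtain y where y: "(y,x) \<in> E" "Suc (lam y) = lam x" using pred by fastforce
      then have "y \<in> V" using E by auto
      then have "(c,y) \<in> E^^m" using Suc y x by auto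
      then show "(c,x) \<in> E^^Suc m" using y by auto
    qed
  qed
  then show "x \<in> V \<Longrightarrow> (c,x) \<in> E^^(lam x)" by blast
qed

lemma level_ball:
  assumes E: "E \<subseteq> V \<times> V" and c: "lam c = 0"
  and step: "\<And>x y. (x,y) \<in> E \<Longrightarrow> lam y \<le> Suc (lam x)"
  and zero: "\<And>x. x \<in> V \<Longrightarrow> lam x = 0 \<Longrightarrow> x = c"
  and pred: "\<And>x. x \<in> V \<Longrightarrow> 0 < lam x \<Longrightarrow> \<exists>y. (y,x) \<in> E \<and> Suc (lam y) = lam x"
  shows "ball_graph V E c n = {x\<in>V. lam x \<le> n}"
proof -
  have "lam x \<le> n" if "(c,x) \<in> E^^k" "k \<le> n" for x k
    using level_upper[of lam c E x k, OF c step that(1)] that(2) by simp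
  moreover have "(c,x) \<in> E^^(lam x)" if "x \<in> V" for x
    using level_lower[OF E zero pred that] by blast
  ultimately show ?thesis unfolding ball_graph_def by blast
qed

lemma aut_relpow:
  assumes g: "automorphism V E g" and E: "E \<subseteq> V \<times> V"
  shows "x \<in> V \<Longrightarrow> y \<in> V \<Longrightarrow> (x,y) \<in> E^^n \<longleftrightarrow> (g x, g y) \<in> E^^n"
proof (induction n arbitrary: y)
  case 0
  have "inj_on g V" using g unfolding automorphism_def bij_betw_def by auto
  then show ?case using 0 by (auto dest: inj_onD)
next
  case (Suc n)
  have b: "bij_betw g V V" and e: "\<forall>x\<in>V. \<forall>y\<in>V. (x, y) \<in> E \<longleftrightarrow> (g x, g y) \<in> E"
    using g unfolding automorphism_def by auto
  show ?case
  proof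
    assume "(x,y) \<in> E^^Suc n"
    then obtain z where z: "(x,z) \<in> E^^n" "(z,y) \<in> E" by auto
    then have "z \<in> V" using E by auto
    then show "(g x, g y) \<in> E^^Suc n" using Suc z e by auto
  next
    assume "(g x, g y) \<in> E^^Suc n"
    then obtain w where w: "(g x, w) \<in> E^^n" "(w, g y) \<in> E" by auto
    then have "w \<in> V" using E by auto
    then obtain z where z: "z \<in> V" "w = g z" using b unfolding bij_betw_def by auto
    then show "(x,y) \<in> E^^Suc n" using Suc w e by auto
  qed
qed

lemma twin_aut:
  assumes E: "E \<subseteq> V \<times> V" and ab: "a \<in> V" "b \<in> V"
  and t1: "\<And>y. (a,y) \<in> E \<longleftrightarrow> (b,y) \<in> E" and t2: "\<And>y. (y,a) \<in> E \<longleftrightarrow> (y,b) \<in> E"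
  shows "automorphism V E (\<lambda>x. if x = a then b else if x = b then a else x)"
proof -
  let ?g = "\<lambda>x. if x = a then b else if x = b then a else x"
  have "bij_betw ?g V V"
    unfolding bij_betw_def inj_on_def using ab by (auto split: if_splits)
  moreover have "(x, y) \<in> E \<longleftrightarrow> (?g x, ?g y) \<in> E" for x y
  proof -
    have "(x, y) \<in> E \<longleftrightarrow> (x, ?g y) \<in> E" using t2[of x] by auto
    also have "\<dots> \<longleftrightarrow> (?g x, ?g y) \<in> E" using t1[of "?g y"] by auto
    finally show ?thesis .
  qed
  ultimately show ?thesis unfolding automorphism_def by blast
qed

lemma density_le1: "density_seq V E x W n \<le> 1"
proof -
  let ?B = "ball_graph V E x n"
  show ?thesis
  proof (cases "finite ?B")
    case True
    then have "card (?B \<inter> W) \<le> card ?B" by (intro card_mono) auto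
    then show ?thesis unfolding density_seq_def
      by (cases "card ?B = 0") (auto simp: divide_le_eq_1)
  next
    case False then show ?thesis unfolding density_seq_def by simp
  qed
qed

lemma density_ge0: "density_seq V E x W n \<ge> 0"
  unfolding density_seq_def by simp



lemma relpow_img:
  assumes f: "inj f"
  shows "(f x, f y) \<in> (map_prod f f ` E)^^n \<longleftrightarrow> (x,y) \<in> E^^n"
proof (induction n arbitrary: y)
  case 0 then show ?case using f by (auto dest: injD)
next
  case (Suc n)
  show ?case
  proof
    assume "(f x, f y) \<in> (map_prod f f ` E)^^Suc n"
    then obtain w where w: "(f x, w) \<in> (map_prod f f ` E)^^n" "(w, f y) \<in> map_prod f f ` E"
      unfolding relpow.simps(2) by (meson relcompEpair)
    then obtain z y' where "(z,y') \<in> E" "w = f z" "f y = f y'" by auto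
    then have "(z,y) \<in> E" "w = f z" using f by (auto dest: injD)
    then show "(x,y) \<in> E^^Suc n" using Suc w by auto
  next
    assume "(x,y) \<in> E^^Suc n"
    then obtain z where z: "(x,z) \<in> E^^n" "(z,y) \<in> E" by auto
    then show "(f x, f y) \<in> (map_prod f f ` E)^^Suc n" using Suc by auto
  qed
qed

lemma ball_img:
  assumes f: "inj f"
  shows "ball_graph (f`V) (map_prod f f ` E) (f x) n = f ` ball_graph V E x n"
  unfolding ball_graph_def by (force simp: relpow_img[OF f])

lemma density_img:
  assumes f: "inj f"
  shows "density_seq (f`V) (map_prod f f ` E) (f x) (f`W) n = density_seq V E x W n"
proof -
  have "f ` ball_graph V E x n \<inter> f ` W = f ` (ball_graph V E x n \<inter> W)"
    using f by (simp add: image_Int)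
  then show ?thesis unfolding density_seq_def ball_img[OF f]
    using f by (simp add: card_image inj_on_subset)
qed

lemma color_class_img:
  assumes f: "inj f"
  shows "color_class (f`V) l c = f ` color_class V (l \<circ> f) c"
  unfolding color_class_def by auto

lemma dist_img1:
  assumes f: "inj f" and d: "distinguishing V E (l \<circ> f)"
  shows "distinguishing (f`V) (map_prod f f ` E) l"
  unfolding distinguishing_def
proof (intro allI impI)
  fix g' assume a: "automorphism (f`V) (map_prod f f ` E) g' \<and> (\<forall>x\<in>f`V. l (g' x) = l x)"
  have b: "bij_betw g' (f`V) (f`V)"
    and e: "\<forall>x\<in>f`V. \<forall>y\<in>f`V. (x, y) \<in> map_prod f f ` E \<longleftrightarrow> (g' x, g' y) \<in> map_prod f f ` E"
    using a unfolding automorphism_def by auto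
  define g where "g = (\<lambda>x. inv f (g' (f x)))"
  have fg: "f (g x) = g' (f x)" if "x \<in> V" for x
  proof -
    have "g' (f x) \<in> f`V" using b that unfolding bij_betw_def by auto
    then show ?thesis unfolding g_def by (auto simp: inv_f_f[OF f])
  qed
  have gV: "g x \<in> V" if "x \<in> V" for x
  proof -
    have "g' (f x) \<in> f`V" using b that unfolding bij_betw_def by auto
    then show ?thesis unfolding g_def by (auto simp: inv_f_f[OF f])
  qed
  have Ef: "(f x, f y) \<in> map_prod f f ` E \<longleftrightarrow> (x,y) \<in> E" for x y
    using f by (auto dest: injD)
  have "bij_betw g V V"
    unfolding bij_betw_def
  proof
    show "inj_on g V"
    proof (rule inj_onI)
      fix x y assume "x \<in> V" "y \<in> V" "g x = g y"
      then have "g' (f x) = g' (f y)" using fg by metis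
      then have "f x = f y" using b \<open>x\<in>V\<close> \<open>y\<in>V\<close> unfolding bij_betw_def by (auto dest: inj_onD)
      then show "x = y" using f by (auto dest: injD)
    qed
    show "g ` V = V"
    proof
      show "g ` V \<subseteq> V" using gV by auto
      show "V \<subseteq> g ` V"
      proof
        fix y assume y: "y \<in> V"
        then have "f y \<in> g' ` f ` V" using b unfolding bij_betw_def by auto
        then obtain x where x: "x \<in> V" "f y = g' (f x)" by auto
        then have "f y = f (g x)" using fg by auto
        then have "y = g x" using f by (auto dest: injD)
        then show "y \<in> g ` V" using x by auto
      qed
    qed
  qed
  moreover have "\<forall>x\<in>V. \<forall>y\<in>V. (x, y) \<in> E \<longleftrightarrow> (g x, g y) \<in> E"
  proof (intro ballI)
    fix x y assume "x \<in> V" "y \<in> V"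
    then show "(x, y) \<in> E \<longleftrightarrow> (g x, g y) \<in> E"
      using e Ef[of x y] Ef[of "g x" "g y"] fg by auto
  qed
  moreover have "\<forall>x\<in>V. (l \<circ> f) (g x) = (l \<circ> f) x" using a fg by auto
  ultimately have "\<forall>x\<in>V. g x = x" using d unfolding distinguishing_def automorphism_def by blast
  then show "\<forall>x\<in>f`V. g' x = x" using fg by force
qed

lemma dist_img2:
  assumes f: "inj f" and d: "distinguishing (f`V) (map_prod f f ` E) l"
  shows "distinguishing V E (l \<circ> f)"
  unfolding distinguishing_def
proof (intro allI impI)
  fix g assume a: "automorphism V E g \<and> (\<forall>x\<in>V. (l \<circ> f) (g x) = (l \<circ> f) x)"
  have b: "bij_betw g V V" and e: "\<forall>x\<in>V. \<forall>y\<in>V. (x, y) \<in> E \<longleftrightarrow> (g x, g y) \<in> E"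
    using a unfolding automorphism_def by auto
  define g' where "g' = (\<lambda>y. f (g (inv f y)))"
  have g'f: "g' (f x) = f (g x)" for x unfolding g'_def by (simp add: inv_f_f[OF f])
  have Ef: "(f x, f y) \<in> map_prod f f ` E \<longleftrightarrow> (x,y) \<in> E" for x y
    using f by (auto dest: injD)
  have "bij_betw g' (f`V) (f`V)"
    unfolding bij_betw_def
  proof
    show "inj_on g' (f`V)"
    proof (rule inj_onI)
      fix x y assume "x \<in> f`V" "y \<in> f`V" "g' x = g' y"
      then obtain x0 y0 where "x0\<in>V" "y0\<in>V" "x = f x0" "y = f y0" "f (g x0) = f (g y0)"
        using g'f by auto
      then show "x = y" using f b unfolding bij_betw_def by (auto dest: injD inj_onD)
    qed
    have "g' ` f ` V = f ` g ` V" using g'f by (auto simp: image_image)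
    then show "g' ` f ` V = f ` V" using b unfolding bij_betw_def by simp
  qed
  moreover have "\<forall>x\<in>f`V. \<forall>y\<in>f`V. (x, y) \<in> map_prod f f ` E \<longleftrightarrow> (g' x, g' y) \<in> map_prod f f ` E"
    using e Ef g'f by auto
  moreover have "\<forall>x\<in>f`V. l (g' x) = l x" using a g'f by auto
  ultimately have "\<forall>x\<in>f`V. g' x = x" using d unfolding distinguishing_def automorphism_def by blast
  then show "\<forall>x\<in>V. g x = x" using g'f f by (auto dest: injD)
qed



datatype vert = A | P | Vx bool nat nat bool

definition VV :: "vert set" where
  "VV = {A, P} \<union> {Vx s k j c | s k j c. j < h k \<and> (c \<or> (s \<and> 2 \<le> k))}"

fun up :: "vert \<Rightarrow> vert \<Rightarrow> bool" where
  "up A P = True"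
| "up P (Vx s k j c) = (k = 0)"
| "up (Vx s k i c) (Vx s' k' j c') = (s = s' \<and> k' = Suc k \<and> (k = 0 \<or> bit (j+1) i))"
| "up _ _ = False"

definition EE :: "(vert \<times> vert) set" where
  "EE = {(x,y). x \<in> VV \<and> y \<in> VV \<and> (up x y \<or> up y x)}"

lemma inVV[simp]: "A \<in> VV" "P \<in> VV" "Vx s k j c \<in> VV \<longleftrightarrow> j < h k \<and> (c \<or> (s \<and> 2 \<le> k))"
  unfolding VV_def by auto

lemma inEE: "(x,y) \<in> EE \<longleftrightarrow> x \<in> VV \<and> y \<in> VV \<and> (up x y \<or> up y x)"
  unfolding EE_def by auto

lemma EE_sub: "EE \<subseteq> VV \<times> VV" unfolding EE_def by auto

lemma up_cases: "up x y \<Longrightarrow> (x = A \<and> y = P) \<or> (\<exists>s j c. x = P \<and> y = Vx s 0 j c) \<or>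
   (\<exists>s k i c j c'. x = Vx s k i c \<and> y = Vx s (Suc k) j c' \<and> (k=0 \<or> bit (j+1) i))"
  by (cases x; cases y) auto

fun lamA :: "vert \<Rightarrow> nat" where
  "lamA A = 0" | "lamA P = 1" | "lamA (Vx s k j c) = k + 2"

fun lamS :: "bool \<Rightarrow> vert \<Rightarrow> nat" where
  "lamS t A = 2" | "lamS t P = 1" | "lamS t (Vx s k j c) = (if s = t then k else k + 2)"

lemma pred_Vx:
  assumes "Vx s (Suc k) j c \<in> VV"
  shows "\<exists>i. Vx s k i True \<in> VV \<and> up (Vx s k i True) (Vx s (Suc k) j c)"
proof (cases k)
  case 0 then show ?thesis by simp
next
  case (Suc k')
  have "j < h (Suc k)" using assms by simp
  then have lt: "j + 1 < 2 ^ h k" using h_bits Suc by blast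
  obtain i where i: "bit (j+1) i" using bit_ex[of "j+1"] by auto
  then have "i < h k" using bit_lt[OF lt] by blast
  then show ?thesis using i by auto
qed

lemma up_lamA: "up x y \<Longrightarrow> lamA y = Suc (lamA x)"
  using up_cases[of x y] by auto

lemma up_lamS: "up x y \<Longrightarrow> lamS t y = Suc (lamS t x) \<or> lamS t x = Suc (lamS t y)"
  using up_cases[of x y] by (auto split: if_splits)

lemma ballA: "ball_graph VV EE A n = {x\<in>VV. lamA x \<le> n}"
proof (rule level_ball[OF EE_sub])
  show "lamA A = 0" by simp
  show "lamA y \<le> Suc (lamA x)" if "(x,y) \<in> EE" for x y
    using that up_lamA[of x y] up_lamA[of y x] unfolding inEE by auto
  show "x = A" if "x \<in> VV" "lamA x = 0" for x
    using that by (cases x) auto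
  show "\<exists>y. (y,x) \<in> EE \<and> Suc (lamA y) = lamA x" if x: "x \<in> VV" "0 < lamA x" for x
  proof (cases x)
    case A then show ?thesis using x by simp
  next
    case P then show ?thesis by (intro exI[of _ A]) (simp add: inEE)
  next
    case (Vx s k j c)
    show ?thesis
    proof (cases k)
      case 0 then show ?thesis using Vx x by (intro exI[of _ P]) (simp add: inEE)
    next
      case (Suc k')
      then obtain i where "Vx s k' i True \<in> VV" "up (Vx s k' i True) x" using pred_Vx x Vx by blast
      then show ?thesis using x Vx Suc by (intro exI[of _ "Vx s k' i True"]) (simp add: inEE)
    qed
  qed
qed

lemma ballS: "ball_graph VV EE (Vx t 0 0 True) n = {x\<in>VV. lamS t x \<le> n}"
proof (rule level_ball[OF EE_sub])
  show "lamS t (Vx t 0 0 True) = 0" by simp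
  show "lamS t y \<le> Suc (lamS t x)" if "(x,y) \<in> EE" for x y
    using that up_lamS[of x y t] up_lamS[of y x t] unfolding inEE by auto
  show "x = Vx t 0 0 True" if "x \<in> VV" "lamS t x = 0" for x
    using that by (cases x) (auto split: if_splits)
  show "\<exists>y. (y,x) \<in> EE \<and> Suc (lamS t y) = lamS t x" if x: "x \<in> VV" "0 < lamS t x" for x
  proof (cases x)
    case A then show ?thesis by (intro exI[of _ P]) (simp add: inEE)
  next
    case P then show ?thesis by (intro exI[of _ "Vx t 0 0 True"]) (simp add: inEE)
  next
    case (Vx s k j c)
    show ?thesis
    proof (cases k)
      case 0 then show ?thesis using Vx x by (intro exI[of _ P]) (auto simp add: inEE split: if_splits)
    next
      case (Suc k')
      then obtain i where "Vx s k' i True \<in> VV" "up (Vx s k' i True) x" using pred_Vx x Vx by blast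
      then show ?thesis using x Vx Suc by (intro exI[of _ "Vx s k' i True"]) (simp add: inEE)
    qed
  qed
qed



definition Fin :: "nat \<Rightarrow> vert set" where
  "Fin n = {A,P} \<union> (\<lambda>((s,c),(k,j)). Vx s k j c) ` (UNIV \<times> (SIGMA k:{..n}. {..<h k}))"

lemma finite_Fin: "finite (Fin n)"
  unfolding Fin_def by (intro finite_UnI finite_imageI finite_cartesian_product finite_SigmaI) auto

lemma card_Fin: "card (Fin n) \<le> 2 + 4 * (\<Sum>k\<le>n. h k)"
proof -
  have "card ((\<lambda>((s,c),(k,j)). Vx s k j c) ` (UNIV \<times> (SIGMA k:{..n}. {..<h k})))
      \<le> card (UNIV \<times> (SIGMA k:{..n}. {..<h k}) :: ((bool\<times>bool)\<times>(nat\<times>nat)) set)"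
    by (rule card_image_le) (intro finite_cartesian_product finite_SigmaI; auto)
  also have "\<dots> = 4 * (\<Sum>k\<le>n. h k)"
  proof -
    have u: "(UNIV::(bool\<times>bool) set) = UNIV \<times> UNIV" by simp
    have "card (UNIV::(bool\<times>bool) set) = 4" unfolding u card_cartesian_product by (simp add: card_UNIV_bool)
    then show ?thesis by (simp add: card_cartesian_product card_SigmaI)
  qed
  finally have i: "card ((\<lambda>((s,c),(k,j)). Vx s k j c) ` (UNIV \<times> (SIGMA k:{..n}. {..<h k}))) \<le> 4 * (\<Sum>k\<le>n. h k)" .
  have "card {A,P} = 2" by simp
  moreover have "card (Fin n) \<le> card {A,P} + card ((\<lambda>((s,c),(k,j)). Vx s k j c) ` (UNIV \<times> (SIGMA k:{..n}. {..<h k})))"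
    unfolding Fin_def by (rule card_Un_le)
  ultimately show ?thesis using i by linarith
qed

lemma Vx_Fin: "k \<le> n \<Longrightarrow> j < h k \<Longrightarrow> Vx s k j c \<in> Fin n"
  unfolding Fin_def by (rule UnI2, rule image_eqI[where x="((s,c),(k,j))"]) auto

lemma AP_Fin: "A \<in> Fin n" "P \<in> Fin n" unfolding Fin_def by auto

lemma in_Fin: "x \<in> VV \<Longrightarrow> lamS t x \<le> n \<or> lamA x \<le> n \<Longrightarrow> x \<in> Fin n"
  by (cases x) (auto split: if_splits intro: Vx_Fin AP_Fin)

lemma up_irrefl: "\<not> up x x" by (metis n_not_Suc_n up_lamA)

lemma simple_VV: "simple_graph VV EE"
  unfolding simple_graph_def using EE_sub up_irrefl by (auto simp: sym_def inEE)

lemma sym_EE: "sym EE" unfolding sym_def by (auto simp: inEE)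

lemma reach_A: "x \<in> VV \<Longrightarrow> (A,x) \<in> EE^*"
proof -
  assume "x \<in> VV"
  then have "x \<in> ball_graph VV EE A (lamA x)" unfolding ballA by simp
  then obtain k where "(A,x) \<in> EE^^k" unfolding ball_graph_def by auto
  then show ?thesis using relpow_imp_rtrancl by blast
qed

lemma connected_VV: "connected_graph VV EE"
  unfolding connected_graph_def
proof (intro ballI)
  fix x y assume "x \<in> VV" "y \<in> VV"
  then have "(A,x) \<in> EE^*" "(A,y) \<in> EE^*" using reach_A by auto
  then have "(x,A) \<in> EE^*"
    by (metis rtrancl_converseI sym_EE sym_conv_converse_eq)
  then show "(x,y) \<in> EE^*" using \<open>(A,y) \<in> EE^*\<close> by simp
qed

lemma locfin_VV: "locally_finite VV EE"
  unfolding locally_finite_def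
proof
  fix x assume x: "x \<in> VV"
  have "{y. (x,y) \<in> EE} \<subseteq> Fin (Suc (lamA x))"
  proof
    fix y assume "y \<in> {y. (x,y) \<in> EE}"
    then have "(x,y) \<in> EE" by simp
    then have "y \<in> VV" "lamA y \<le> Suc (lamA x)"
      using up_lamA[of x y] up_lamA[of y x] unfolding inEE by auto
    then show "y \<in> Fin (Suc (lamA x))" using in_Fin by blast
  qed
  then show "finite {y. (x,y) \<in> EE}" using finite_Fin finite_subset by blast
qed

fun l0 :: "vert \<Rightarrow> bool" where
  "l0 A = False" | "l0 P = False"
| "l0 (Vx s k j c) = (if k = 0 then s else if k = 1 then j = 1 else s \<and> c)"

lemma nbr_A: "(A,z) \<in> EE \<Longrightarrow> z = P"
  unfolding inEE using up_cases[of A z] up_cases[of z A] by auto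

lemma two_nbrs:
  assumes x: "x \<in> VV" "x \<noteq> A"
  shows "\<exists>y1 y2. y1 \<noteq> y2 \<and> (x,y1) \<in> EE \<and> (x,y2) \<in> EE"
proof (cases x)
  case A then show ?thesis using x by simp
next
  case P then show ?thesis
    by (intro exI[of _ A] exI[of _ "Vx False 0 0 True"]) (simp add: inEE)
next
  case (Vx s k j c)
  have j: "j < h k" using x Vx by simp
  have up1: "Vx s (Suc k) (2^j - 1) True \<in> VV"
  proof (cases k)
    case 0 then show ?thesis using j by simp
  next
    case (Suc k')
    have "2^j < (2::nat)^h k" using j by simp
    moreover have "1 \<le> (2::nat)^j" by simp
    ultimately have "2^j - 1 < (2::nat)^h k - 1" by linarith
    then show ?thesis using Suc by simp
  qed
  have up2: "up x (Vx s (Suc k) (2^j - 1) True)" using Vx by (simp add: bit_exp_iff)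
  obtain y where y: "(y,x) \<in> EE" "lamA y < lamA x"
  proof (cases k)
    case 0 then show ?thesis using that[of P] Vx x by (simp add: inEE)
  next
    case (Suc k')
    then obtain i where "Vx s k' i True \<in> VV" "up (Vx s k' i True) x" using pred_Vx x Vx by blast
    then show ?thesis using that[of "Vx s k' i True"] x Vx Suc by (simp add: inEE)
  qed
  show ?thesis
  proof (intro exI conjI)
    show "(x,y) \<in> EE" using y sym_EE unfolding sym_def by blast
    show "(x, Vx s (Suc k) (2^j - 1) True) \<in> EE" using up1 up2 x by (simp add: inEE)
    show "y \<noteq> Vx s (Suc k) (2^j - 1) True" using y Vx by auto
  qed
qed

lemma determ:
  assumes x: "x \<in> VV" and x': "x' \<in> VV" and lam: "lamA x = lamA x'" and col: "l0 x = l0 x'"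
  and nb: "\<forall>y\<in>VV. lamA y < lamA x \<longrightarrow> ((y,x) \<in> EE \<longleftrightarrow> (y,x') \<in> EE)"
  shows "x = x'"
proof (cases x)
  case A then show ?thesis using lam by (cases x') auto
next
  case P then show ?thesis using lam by (cases x') auto
next
  case (Vx s k j c)
  then obtain s' j' c' where x'eq: "x' = Vx s' k j' c'" using lam by (cases x') auto
  show ?thesis
  proof (cases k)
    case 0 then show ?thesis using x x' Vx x'eq col by auto
  next
    case (Suc k1)
    show ?thesis
    proof (cases k1)
      case 0
      have "(Vx s 0 0 True, x) \<in> EE" using x Vx Suc 0 by (simp add: inEE)
      then have "(Vx s 0 0 True, x') \<in> EE" using nb Vx Suc 0 by simp
      then have "s = s'" using x'eq Suc 0 by (simp add: inEE)
      then show ?thesis using x x' Vx x'eq col Suc 0 by auto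
    next
      case (Suc k2)
      have kk: "k = Suc (Suc k2)" using \<open>k = Suc k1\<close> Suc by simp
      have lt: "j + 1 < 2 ^ h (Suc k2)" using h_bits[of j "Suc k2"] x Vx kk by simp
      have lt': "j' + 1 < 2 ^ h (Suc k2)" using h_bits[of j' "Suc k2"] x' x'eq kk by simp
      have e1: "(Vx s (Suc k2) i True, x) \<in> EE \<longleftrightarrow> i < h (Suc k2) \<and> bit (j+1) i" for i
        using x Vx kk by (auto simp add: inEE)
      have e2: "(Vx s (Suc k2) i True, x') \<in> EE \<longleftrightarrow> i < h (Suc k2) \<and> s = s' \<and> bit (j'+1) i" for i
        using x' x'eq kk by (auto simp add: inEE)
      have e: "(Vx s (Suc k2) i True, x) \<in> EE \<longleftrightarrow> (Vx s (Suc k2) i True, x') \<in> EE" if "i < h (Suc k2)" for i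
        using nb that Vx kk by simp
      obtain i where i: "bit (j+1) i" using bit_ex[of "j+1"] by auto
      then have "i < h (Suc k2)" using bit_lt[OF lt] by blast
      then have ss: "s = s'" using e[of i] e1[of i] e2[of i] i by auto
      have "\<forall>i<h (Suc k2). bit (j+1) i = bit (j'+1) i" using e e1 e2 ss by blast
      then have "j + 1 = j' + 1" using bit_diff[OF lt lt'] by blast
      then have jj: "j = j'" by simp
      have "c = c'" using col x x' Vx x'eq kk ss by (cases s) auto
      then show ?thesis using Vx x'eq ss jj by simp
    qed
  qed
qed

lemma dist_l0: "distinguishing VV EE l0"
  unfolding distinguishing_def
proof (intro allI impI)
  fix g assume a: "automorphism VV EE g \<and> (\<forall>x\<in>VV. l0 (g x) = l0 x)"
  have aut: "automorphism VV EE g" and col: "\<forall>x\<in>VV. l0 (g x) = l0 x" using a by auto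
  have b: "bij_betw g VV VV" and e: "\<forall>x\<in>VV. \<forall>y\<in>VV. (x, y) \<in> EE \<longleftrightarrow> (g x, g y) \<in> EE"
    using aut unfolding automorphism_def by auto
  have gV: "g x \<in> VV" if "x \<in> VV" for x using b that unfolding bij_betw_def by auto
  have gA: "g A = A"
  proof (rule ccontr)
    assume "g A \<noteq> A"
    then obtain y1 y2 where y: "y1 \<noteq> y2" "(g A, y1) \<in> EE" "(g A, y2) \<in> EE"
      using two_nbrs[OF gV[OF inVV(1)] \<open>g A \<noteq> A\<close>] by blast
    then have "y1 \<in> VV" "y2 \<in> VV" using EE_sub by auto
    then obtain z1 z2 where z: "z1 \<in> VV" "z2 \<in> VV" "y1 = g z1" "y2 = g z2"
      using b unfolding bij_betw_def by (metis imageE)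
    then have "(A,z1) \<in> EE" "(A,z2) \<in> EE" using e y by auto
    then have "z1 = P" "z2 = P" using nbr_A by auto
    then show False using y z by simp
  qed
  have lamg: "lamA (g x) = lamA x" if x: "x \<in> VV" for x
  proof -
    have "x \<in> ball_graph VV EE A (lamA x)" unfolding ballA using x by simp
    then obtain k where k: "k \<le> lamA x" "(A,x) \<in> EE^^k" unfolding ball_graph_def by auto
    then have "(g A, g x) \<in> EE^^k" using aut_relpow[OF aut EE_sub, of A x k] x by simp
    then have "g x \<in> ball_graph VV EE A (lamA x)" unfolding ball_graph_def using gA gV x k by auto
    then have 1: "lamA (g x) \<le> lamA x" unfolding ballA by simp
    have "g x \<in> ball_graph VV EE A (lamA (g x))" unfolding ballA using gV x by simp
    then obtain k where k: "k \<le> lamA (g x)" "(A,g x) \<in> EE^^k" unfolding ball_graph_def by auto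
    then have "(A, x) \<in> EE^^k" using aut_relpow[OF aut EE_sub, of A x k] x gA by simp
    then have "x \<in> ball_graph VV EE A (lamA (g x))" unfolding ball_graph_def using x k by auto
    then have "lamA x \<le> lamA (g x)" unfolding ballA by simp
    then show ?thesis using 1 by simp
  qed
  have "\<forall>x\<in>VV. lamA x = m \<longrightarrow> g x = x" for m
  proof (induction m rule: less_induct)
    case (less m)
    show ?case
    proof (intro ballI impI)
      fix x assume x: "x \<in> VV" "lamA x = m"
      have "\<forall>y\<in>VV. lamA y < lamA x \<longrightarrow> ((y,x) \<in> EE \<longleftrightarrow> (y, g x) \<in> EE)"
      proof (intro ballI impI)
        fix y assume y: "y \<in> VV" "lamA y < lamA x"
        then have "g y = y" using less x by auto
        then show "(y,x) \<in> EE \<longleftrightarrow> (y, g x) \<in> EE" using e y x by metis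
      qed
      then show "g x = x" using determ[OF x(1) gV[OF x(1)]] lamg[OF x(1)] col x by metis
    qed
  qed
  then show "\<forall>x\<in>VV. g x = x" by blast
qed



declare h.simps(3)[simp del]

lemma twin_diff:
  assumes d: "distinguishing VV EE l" and k: "2 \<le> k" and j: "j < h k"
  shows "l (Vx True k j True) \<noteq> l (Vx True k j False)"
proof
  let ?a = "Vx True k j True" and ?b = "Vx True k j False"
  assume eq: "l ?a = l ?b"
  have ab: "?a \<in> VV" "?b \<in> VV" using k j by auto
  have u1: "up ?a y = up ?b y" for y by (cases y) auto
  have u2: "up y ?a = up y ?b" for y by (cases y) auto
  have t1: "(?a,y) \<in> EE \<longleftrightarrow> (?b,y) \<in> EE" for y unfolding inEE using ab u1[of y] u2[of y] by auto
  have t2: "(y,?a) \<in> EE \<longleftrightarrow> (y,?b) \<in> EE" for y unfolding inEE using ab u1[of y] u2[of y] by auto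
  let ?g = "\<lambda>x. if x = ?a then ?b else if x = ?b then ?a else x"
  have "automorphism VV EE ?g" by (rule twin_aut[OF EE_sub ab t1 t2])
  moreover have "\<forall>x\<in>VV. l (?g x) = l x" using eq by auto
  ultimately have "\<forall>x\<in>VV. ?g x = x" using d unfolding distinguishing_def by blast
  then have "?g ?a = ?a" using ab by blast
  then show False by simp
qed

lemma R0_bound:
  assumes d: "distinguishing VV EE l"
  shows "density_seq VV EE (Vx True 0 0 True) (color_class VV l c) (Suc (Suc m)) \<ge> 1/10"
proof -
  let ?n = "Suc (Suc m)"
  let ?B = "ball_graph VV EE (Vx True 0 0 True) ?n"
  have B: "?B = {x\<in>VV. lamS True x \<le> ?n}" by (rule ballS)
  have BF: "?B \<subseteq> Fin ?n" unfolding B using in_Fin by blast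
  have finB: "finite ?B" using BF finite_Fin finite_subset by blast
  have "card ?B \<le> card (Fin ?n)" using BF finite_Fin by (rule card_mono[rotated])
  also have "\<dots> \<le> 2 + 4 * (\<Sum>k\<le>?n. h k)" by (rule card_Fin)
  also have "\<dots> \<le> 2 + 8 * h ?n" using h_sum1[of ?n] by simp
  finally have cB: "card ?B \<le> 2 + 8 * h ?n" .
  let ?f = "\<lambda>j. if l (Vx True ?n j True) = c then Vx True ?n j True else Vx True ?n j False"
  have sub: "?f ` {..<h ?n} \<subseteq> ?B \<inter> color_class VV l c"
  proof
    fix x assume "x \<in> ?f ` {..<h ?n}"
    then obtain j where j: "j < h ?n" "x = ?f j" by blast
    have "l (Vx True ?n j True) \<noteq> l (Vx True ?n j False)" using twin_diff[OF d _ j(1)] by simp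
    then have lc: "l x = c" unfolding j(2)
      by (cases c; cases "l (Vx True ?n j True)"; cases "l (Vx True ?n j False)") auto
    have "Vx True ?n j b \<in> VV" for b using j(1) by simp
    then have "x \<in> VV" unfolding j(2) by simp
    moreover have "lamS True x \<le> ?n" unfolding j(2) by simp
    ultimately show "x \<in> ?B \<inter> color_class VV l c" unfolding B color_class_def using lc by auto
  qed
  have inj: "inj_on ?f {..<h ?n}" by (rule inj_onI) (auto split: if_splits)
  have "h ?n = card (?f ` {..<h ?n})" using card_image[OF inj] by simp
  also have "\<dots> \<le> card (?B \<inter> color_class VV l c)" using sub finB by (intro card_mono) auto
  finally have ca: "h ?n \<le> card (?B \<inter> color_class VV l c)" .
  have "card (?B \<inter> color_class VV l c) \<le> card ?B" using finB by (intro card_mono) auto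
  then have pos: "card ?B > 0" using ca h_pos[of ?n] by linarith
  have "card ?B \<le> 10 * card (?B \<inter> color_class VV l c)" using cB ca h_pos[of ?n] by linarith
  then have "real (card ?B) \<le> 10 * real (card (?B \<inter> color_class VV l c))" by linarith
  then show ?thesis unfolding density_seq_def using pos by (simp add: field_simps)
qed

lemma R0_lim:
  assumes d: "distinguishing VV EE l" and t: "density_seq VV EE (Vx True 0 0 True) (color_class VV l c) \<longlonglongrightarrow> a"
  shows "a \<ge> 1/10"
proof (rule LIMSEQ_le_const[OF t])
  show "\<exists>N. \<forall>n\<ge>N. 1/10 \<le> density_seq VV EE (Vx True 0 0 True) (color_class VV l c) n"
  proof (intro exI allI impI)
    fix n :: nat assume "2 \<le> n"
    then obtain m where "n = Suc (Suc m)" by (metis add_2_eq_Suc le_Suc_ex)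
    then show "1/10 \<le> density_seq VV EE (Vx True 0 0 True) (color_class VV l c) n" using R0_bound[OF d] by simp
  qed
qed



lemma exp_bound: "(x::nat) * (2*x+1) + 6 \<le> 6 * 2^x"
proof (induction x)
  case 0 then show ?case by simp
next
  case (Suc x)
  have "x < 2^x" by (rule less_exp)
  then show ?case using Suc.IH by (simp add: algebra_simps, linarith)
qed

abbreviation "L0 \<equiv> Vx False 0 0 True"

lemma L0_card_pos: "card (ball_graph VV EE L0 n) > 0"
proof -
  have B: "ball_graph VV EE L0 n = {x\<in>VV. lamS False x \<le> n}" by (rule ballS)
  have "ball_graph VV EE L0 n \<subseteq> Fin n" unfolding B using in_Fin by blast
  then have "finite (ball_graph VV EE L0 n)" using finite_Fin finite_subset by blast
  moreover have "L0 \<in> ball_graph VV EE L0 n" unfolding B by simp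
  ultimately show ?thesis by (simp add: card_gt_0_iff) blast
qed

lemma L0_fin: "finite (ball_graph VV EE L0 n)"
proof -
  have B: "ball_graph VV EE L0 n = {x\<in>VV. lamS False x \<le> n}" by (rule ballS)
  have "ball_graph VV EE L0 n \<subseteq> Fin n" unfolding B using in_Fin by blast
  then show ?thesis using finite_Fin finite_subset by blast
qed

lemma L0_bound:
  "density_seq VV EE L0 (color_class VV l0 True) (Suc (Suc m)) \<le> 6 / real (Suc (Suc m))"
proof -
  let ?n = "Suc (Suc m)"
  let ?B = "ball_graph VV EE L0 ?n"
  let ?x = "h (Suc m)"
  have B: "?B = {x\<in>VV. lamS False x \<le> ?n}" by (rule ballS)
  let ?I = "(\<lambda>(c,(k,j)). Vx True k j c) ` (UNIV \<times> (SIGMA k:{..m}. {..<h k}))"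
  have sub: "?B \<inter> color_class VV l0 True \<subseteq> {Vx False 1 1 True} \<union> ?I"
  proof
    fix x assume x: "x \<in> ?B \<inter> color_class VV l0 True"
    then have xV: "x \<in> VV" and lx: "lamS False x \<le> ?n" and bl: "l0 x"
      unfolding B color_class_def by auto
    show "x \<in> {Vx False 1 1 True} \<union> ?I"
    proof (cases x)
      case A then show ?thesis using bl by simp
    next
      case P then show ?thesis using bl by simp
    next
      case (Vx s k j c)
      show ?thesis
      proof (cases s)
        case True
        then have "k \<le> m" "j < h k" using lx xV Vx by auto
        then have "((c,(k,j)) :: bool\<times>(nat\<times>nat)) \<in> UNIV \<times> (SIGMA k:{..m}. {..<h k})" by auto
        moreover have "x = (\<lambda>(c,(k,j)). Vx True k j c) (c,(k,j))" using Vx True by simp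
        ultimately show ?thesis by blast
      next
        case False
        then show ?thesis using bl xV Vx by (auto split: if_splits)
      qed
    qed
  qed
  have "card ?I \<le> card (UNIV \<times> (SIGMA k:{..m}. {..<h k}) :: (bool\<times>(nat\<times>nat)) set)"
    by (rule card_image_le) (intro finite_cartesian_product finite_SigmaI; auto)
  also have "\<dots> = 2 * (\<Sum>k\<le>m. h k)"
    by (simp add: card_cartesian_product card_SigmaI card_UNIV_bool)
  also have "\<dots> \<le> 2 * ?x" using h_sum2[of m] by simp
  finally have cI: "card ?I \<le> 2 * ?x" .
  have "card (?B \<inter> color_class VV l0 True) \<le> card ({Vx False 1 1 True} \<union> ?I)"
    by (rule card_mono[OF _ sub]) (intro finite_UnI finite_imageI finite_cartesian_product finite_SigmaI; auto)
  also have "\<dots> \<le> card {Vx False 1 1 True} + card ?I" by (rule card_Un_le)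
  finally have ca: "card (?B \<inter> color_class VV l0 True) \<le> 2 * ?x + 1" using cI by simp
  have lay: "(\<lambda>j. Vx False ?n j True) ` {..<h ?n} \<subseteq> ?B" unfolding B by auto
  have "h ?n = card ((\<lambda>j. Vx False ?n j True) ` {..<h ?n})"
    by (simp add: card_image inj_on_def)
  also have "\<dots> \<le> card ?B" using lay L0_fin by (rule card_mono[rotated])
  finally have cb: "2 ^ ?x - 1 \<le> card ?B" by (simp add: h.simps(3))
  have xn: "?n \<le> ?x" using h_ge[of "Suc m"] by simp
  have "?x * (2 * ?x + 1) + 6 \<le> 6 * 2 ^ ?x" by (rule exp_bound)
  then have "?x * (2 * ?x + 1) \<le> 6 * (2 ^ ?x - 1)" by (simp add: algebra_simps)
  also have "\<dots> \<le> 6 * card ?B" using cb by simp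
  finally have e1: "?x * (2 * ?x + 1) \<le> 6 * card ?B" .
  have "card (?B \<inter> color_class VV l0 True) * ?n \<le> (2 * ?x + 1) * ?x"
    using ca xn by (intro mult_le_mono) auto
  then have "card (?B \<inter> color_class VV l0 True) * ?n \<le> 6 * card ?B" using e1 by (simp add: mult.commute)
  then have "real (card (?B \<inter> color_class VV l0 True)) * real ?n \<le> 6 * real (card ?B)"
    by (metis of_nat_le_iff of_nat_mult of_nat_numeral)
  then show ?thesis unfolding density_seq_def using L0_card_pos[of ?n]
    by (simp add: field_simps del: of_nat_Suc)
qed

lemma L0_blue: "density_seq VV EE L0 (color_class VV l0 True) \<longlonglongrightarrow> 0"
proof (rule tendsto_sandwich[where f="\<lambda>_. 0" and h="\<lambda>n. 6 * (1 / real n)"])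
  show "\<forall>\<^sub>F n in sequentially. 0 \<le> density_seq VV EE L0 (color_class VV l0 True) n"
    by (simp add: density_ge0)
  show "\<forall>\<^sub>F n in sequentially. density_seq VV EE L0 (color_class VV l0 True) n \<le> 6 * (1 / real n)"
  proof (rule eventually_sequentiallyI[of 2])
    fix n :: nat assume "2 \<le> n"
    then obtain m where "n = Suc (Suc m)" by (metis add_2_eq_Suc le_Suc_ex)
    then show "density_seq VV EE L0 (color_class VV l0 True) n \<le> 6 * (1 / real n)"
      using L0_bound[of m] by simp
  qed
  show "(\<lambda>_. 0::real) \<longlonglongrightarrow> 0" by simp
  show "(\<lambda>n. 6 * (1 / real n)) \<longlonglongrightarrow> 0"
    using tendsto_mult_right_zero[OF lim_inverse_n', of 6] by simp
qed

lemma L0_red: "density_seq VV EE L0 (color_class VV l0 False) \<longlonglongrightarrow> 1"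
proof -
  have eq: "density_seq VV EE L0 (color_class VV l0 False) n = 1 - density_seq VV EE L0 (color_class VV l0 True) n" for n
  proof -
    let ?B = "ball_graph VV EE L0 n"
    have BV: "?B \<subseteq> VV" unfolding ball_graph_def by auto
    have "?B = (?B \<inter> color_class VV l0 True) \<union> (?B \<inter> color_class VV l0 False)"
      using BV unfolding color_class_def by auto
    moreover have "(?B \<inter> color_class VV l0 True) \<inter> (?B \<inter> color_class VV l0 False) = {}"
      unfolding color_class_def by auto
    ultimately have "card ?B = card (?B \<inter> color_class VV l0 True) + card (?B \<inter> color_class VV l0 False)"
      using L0_fin[of n] by (metis card_Un_disjoint finite_Int)
    then have s1: "real (card (?B \<inter> color_class VV l0 True)) + real (card (?B \<inter> color_class VV l0 False)) = real (card ?B)"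
      by simp
    have s2: "real (card ?B) > 0" using L0_card_pos[of n] by simp
    show ?thesis unfolding density_seq_def using s1 s2 by (simp add: field_simps)
  qed
  have "(\<lambda>n. 1 - density_seq VV EE L0 (color_class VV l0 True) n) \<longlonglongrightarrow> 1 - 0"
    by (intro tendsto_intros L0_blue)
  moreover have "density_seq VV EE L0 (color_class VV l0 False) = (\<lambda>n. 1 - density_seq VV EE L0 (color_class VV l0 True) n)"
    using eq by auto
  ultimately show ?thesis by simp
qed



instance vert :: countable by countable_datatype

abbreviation "R0 \<equiv> Vx True 0 0 True"

lemma seq_img:
  "density_seq ((to_nat::vert\<Rightarrow>nat) ` VV) (map_prod to_nat to_nat ` EE) (to_nat x) (color_class (to_nat ` VV) l c) =
   density_seq VV EE x (color_class VV (l \<circ> to_nat) c)"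
  unfolding color_class_img[OF inj_to_nat] by (rule ext, rule density_img[OF inj_to_nat])

lemma lim_le1: "X \<longlonglongrightarrow> a \<Longrightarrow> (\<And>n. X n \<le> 1) \<Longrightarrow> a \<le> (1::real)"
  by (rule LIMSEQ_le_const2) auto

theorem mainTheorem2:
  shows "\<exists>(V :: nat set) E v v'.
     simple_graph V E \<and> countable V \<and> connected_graph V E \<and> locally_finite V E \<and>
     v \<in> V \<and> v' \<in> V \<and>
     dist_density_zero_at V E v \<and>
     \<not> dist_density_zero V E \<and>
     (\<forall>l. distinguishing V E l \<longrightarrow> \<not> density_zero_at_col V E v' l)"
proof -
  let ?f = "to_nat :: vert \<Rightarrow> nat"
  have f: "inj ?f" by (rule inj_to_nat)
  define V where "V = ?f ` VV"
  define E where "E = map_prod ?f ?f ` EE"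
  have sg: "simple_graph V E"
  proof -
    have "E \<subseteq> V \<times> V" unfolding V_def E_def using EE_sub by auto
    moreover have "sym E" unfolding E_def using sym_EE unfolding sym_def by auto
    moreover have "(x, x) \<notin> E" for x
    proof
      assume "(x,x) \<in> E"
      then obtain a b where "(a,b) \<in> EE" "x = ?f a" "x = ?f b" unfolding E_def by auto
      then have "(a,a) \<in> EE" using f by (auto dest: injD)
      then show False using simple_VV unfolding simple_graph_def by auto
    qed
    ultimately show ?thesis unfolding simple_graph_def by auto
  qed
  have ct: "countable V" by simp
  have cn: "connected_graph V E"
    unfolding connected_graph_def
  proof (intro ballI)
    fix x y assume "x \<in> V" "y \<in> V"
    then obtain a b where ab: "a \<in> VV" "b \<in> VV" "x = ?f a" "y = ?f b" unfolding V_def by auto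
    then have "(a,b) \<in> EE^*" using connected_VV unfolding connected_graph_def by auto
    then obtain k where "(a,b) \<in> EE^^k" using rtrancl_power by blast
    then have "(?f a, ?f b) \<in> E^^k" unfolding E_def using relpow_img[OF f] by blast
    then show "(x,y) \<in> E^*" using ab relpow_imp_rtrancl by blast
  qed
  have lf: "locally_finite V E"
    unfolding locally_finite_def
  proof
    fix x assume "x \<in> V"
    then obtain a where a: "a \<in> VV" "x = ?f a" unfolding V_def by auto
    have "{y. (x,y) \<in> E} \<subseteq> ?f ` {y. (a,y) \<in> EE}"
    proof
      fix y assume "y \<in> {y. (x,y) \<in> E}"
      then obtain c d where "(c,d) \<in> EE" "x = ?f c" "y = ?f d" unfolding E_def by auto
      then show "y \<in> ?f ` {y. (a,y) \<in> EE}" using a f by (auto dest: injD)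
    qed
    moreover have "finite (?f ` {y. (a,y) \<in> EE})" using locfin_VV a unfolding locally_finite_def by auto
    ultimately show "finite {y. (x,y) \<in> E}" using finite_subset by blast
  qed
  have vV: "?f L0 \<in> V" "?f R0 \<in> V" unfolding V_def by auto
  have seq: "density_seq V E (?f x) (color_class V l c) = density_seq VV EE x (color_class VV (l \<circ> ?f) c)"
    for x l c unfolding V_def E_def by (rule seq_img)
  have at: "dist_density_zero_at V E (?f L0)"
  proof -
    let ?l = "l0 \<circ> inv ?f"
    have ll: "?l \<circ> ?f = l0" by (auto simp: fun_eq_iff inv_f_f[OF f])
    have "distinguishing V E ?l" unfolding V_def E_def by (rule dist_img1[OF f]) (simp add: ll dist_l0)
    moreover have "density_zero_at_col V E (?f L0) ?l"
      unfolding density_zero_at_col_def seq ll using L0_blue L0_red by (intro exI[of _ 0] exI[of _ 1]) auto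
    ultimately show ?thesis unfolding dist_density_zero_at_def by blast
  qed
  have key: "a \<ge> 1/10" if d: "distinguishing V E l" and t: "density_seq V E (?f R0) (color_class V l c) \<longlonglongrightarrow> a" for l c a
  proof -
    have "distinguishing VV EE (l \<circ> ?f)" using dist_img2[OF f] d unfolding V_def E_def by blast
    then show ?thesis using R0_lim t unfolding seq by blast
  qed
  have third: "\<forall>l. distinguishing V E l \<longrightarrow> \<not> density_zero_at_col V E (?f R0) l"
  proof (intro allI impI notI)
    fix l assume d: "distinguishing V E l" and z: "density_zero_at_col V E (?f R0) l"
    then obtain a b where ab: "density_seq V E (?f R0) (color_class V l True) \<longlonglongrightarrow> a"
      "density_seq V E (?f R0) (color_class V l False) \<longlonglongrightarrow> b" and m: "min a b = 0"
      unfolding density_zero_at_col_def by blast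
    have "a \<ge> 1/10" "b \<ge> 1/10" using key[OF d ab(1)] key[OF d ab(2)] by auto
    then show False using m by (simp add: min_def split: if_splits)
  qed
  have second: "\<not> dist_density_zero V E"
  proof
    assume "dist_density_zero V E"
    then obtain l where d: "distinguishing V E l" and z: "density_zero_col V E l"
      unfolding dist_density_zero_def by blast
    have conv: "\<forall>x\<in>V. convergent (density_seq V E x (color_class V l c))" for c
      using z unfolding density_zero_col_def by (cases c) auto
    have sup: "(SUP x\<in>V. lim (density_seq V E x (color_class V l c))) \<ge> 1/10" for c
    proof -
      have bdd: "bdd_above ((\<lambda>x. lim (density_seq V E x (color_class V l c))) ` V)"
      proof (rule bdd_aboveI2)
        fix x assume "x \<in> V"
        then have "density_seq V E x (color_class V l c) \<longlonglongrightarrow> lim (density_seq V E x (color_class V l c))"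
          using conv convergent_LIMSEQ_iff by blast
        then show "lim (density_seq V E x (color_class V l c)) \<le> 1" by (rule lim_le1[OF _ density_le1])
      qed
      have "density_seq V E (?f R0) (color_class V l c) \<longlonglongrightarrow> lim (density_seq V E (?f R0) (color_class V l c))"
        using conv vV convergent_LIMSEQ_iff by blast
      then have "1/10 \<le> lim (density_seq V E (?f R0) (color_class V l c))" using key[OF d] by blast
      also have "\<dots> \<le> (SUP x\<in>V. lim (density_seq V E x (color_class V l c)))"
        by (rule cSUP_upper[OF vV(2) bdd])
      finally show ?thesis .
    qed
    have "min (SUP x\<in>V. lim (density_seq V E x (color_class V l True)))
         (SUP x\<in>V. lim (density_seq V E x (color_class V l False))) = 0"
      using z unfolding density_zero_col_def by blast
    then show False using sup[of True] sup[of False] by (simp add: min_def split: if_splits)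
  qed
  show ?thesis
    by (intro exI[of _ V] exI[of _ E] exI[of _ "?f L0"] exI[of _ "?f R0"])
       (use sg ct cn lf vV at second third in blast)
qed

end
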